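(* Let $q$ be a prime power, let $1 \le k \le n$ be integers, and let $S \subseteq \mathcal{L}_{n,k}$. If $\mu_k(S) = (1+z)^{-1}$ where $z \in \mathbb{R}_{\ge 0}$, then \[ \mu_{k-1}(\partial S) \ge \left(1+ \frac{q(q^{k-1}-1)(q^{n-k}-1)} {(q^k-1)(q^{n-k+1}-1)} \cdot z \right)^{-1} \ge \left(1+\frac{z}{q}\right)^{-1}. \]
   Context: $\mathbb{F}_q$ is the finite field with $q$ elements. $\mathcal{L}_{n,k}$ denotes the set of $k$-dimensional linear subspaces of $(\mathbb{F}_q)^n$. For $S \subseteq \mathcal{L}_{n,k}$, $\mu_k(S) = |S|/|\mathcal{L}_{n,k}|$. For $1 \le k \le n$ and $S \subseteq \mathcal{L}_{n,k}$, the shadow of $S$ is $\partial S = \{B \in \mathcal{L}_{n,k-1} : \exists A \in S,\ B \subset A\}$, and $\mu_{k-1}(\partial S) = |\partial S|/|\mathcal{L}_{n,k-1}|$. *)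

theory Defs
  imports "HOL-Analysis.Analysis"
begin

definition subspaces_of_dim :: "nat \<Rightarrow> ('a::{field,finite} ^ 'n) set set" where
  "subspaces_of_dim k = {V. vec.subspace V \<and> vec.dim V = k}"

definition mu :: "nat \<Rightarrow> ('a::{field,finite} ^ 'n) set set \<Rightarrow> real" where
  "mu k S = real (card S) / real (card (subspaces_of_dim k :: ('a ^ 'n) set set))"

definition shadow :: "nat \<Rightarrow> ('a::{field,finite} ^ 'n) set set \<Rightarrow> ('a ^ 'n) set set" where
  "shadow k S = {B \<in> subspaces_of_dim (k - 1). \<exists>A \<in> S. B \<subset> A}"

end

theory Submission
  imports Defs
begin


lemma card_field_ge2: "CARD('a::{field,finite}) \<ge> 2"
proof -
  have "{0,1} \<subseteq> (UNIV::'a set)" by auto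
  hence "card {0::'a,1} \<le> CARD('a)" by (intro card_mono) auto
  thus ?thesis by simp
qed

lemma card_span_indep:
  fixes B :: "('a::{field,finite}^'n) set"
  shows "vec.independent B \<Longrightarrow> card (vec.span B) = CARD('a) ^ card B"
proof (induction B rule: finite_induct[OF finite_class.finite])
  case 1
  then show ?case by simp
next
  case (2 x F)
  have indF: "vec.independent F" and xF: "x \<notin> vec.span F"
    using "2.prems" "2.hyps" by (simp_all add: vec.independent_insert)
  have eq: "vec.span (insert x F) = (\<lambda>(c,y). c *s x + y) ` (UNIV \<times> vec.span F)"
  proof
    show "vec.span (insert x F) \<subseteq> (\<lambda>(c,y). c *s x + y) ` (UNIV \<times> vec.span F)"
    proof
      fix y assume "y \<in> vec.span (insert x F)"
      then obtain c where "y - c *s x \<in> vec.span F" using vec.span_insert by blast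
      then show "y \<in> (\<lambda>(c,y). c *s x + y) ` (UNIV \<times> vec.span F)"
        by (intro image_eqI[of _ _ "(c, y - c *s x)"]) auto
    qed
  next
    show "(\<lambda>(c,y). c *s x + y) ` (UNIV \<times> vec.span F) \<subseteq> vec.span (insert x F)"
    proof clarify
      fix c y assume y: "y \<in> vec.span F"
      have "c *s x \<in> vec.span (insert x F)" by (intro vec.span_scale vec.span_base) simp
      moreover have "y \<in> vec.span (insert x F)" using y vec.span_mono[of F "insert x F"] by blast
      ultimately show "c *s x + y \<in> vec.span (insert x F)" by (rule vec.span_add)
    qed
  qed
  have inj: "inj_on (\<lambda>(c,y). c *s x + y) (UNIV \<times> vec.span F)"
  proof (rule inj_onI, clarsimp)
    fix c y c' y'
    assume y: "y \<in> vec.span F" and y': "y' \<in> vec.span F" and e: "c *s x + y = c' *s x + y'"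
    show "c = c' \<and> y = y'"
    proof (cases "c = c'")
      case True then show ?thesis using e by simp
    next
      case False
      have "(c - c') *s x = y' - y" using e by (simp add: algebra_simps vector_sub_rdistrib)
      hence "x = inverse (c - c') *s (y' - y)" using False
        by (metis (no_types, lifting) right_minus_eq vector_smult_assoc vector_smult_lid field_class.field_inverse)
      hence "x \<in> vec.span F" using y y' by (simp add: vec.span_diff vec.span_scale)
      with xF show ?thesis by simp
    qed
  qed
  have "card (vec.span (insert x F)) = card ((UNIV::'a set) \<times> vec.span F)"
    unfolding eq using inj by (simp add: card_image)
  also have "\<dots> = CARD('a) * card (vec.span F)" by (simp add: card_cartesian_product)
  finally show ?case using "2.IH"[OF indF] "2.hyps" by simp
qed

lemma card_subspace:
  fixes W :: "('a::{field,finite}^'n) set"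
  assumes "vec.subspace W"
  shows "card W = CARD('a) ^ vec.dim W"
proof -
  obtain B where B: "B \<subseteq> W" "vec.independent B" "W \<subseteq> vec.span B" "card B = vec.dim W"
    using vec.basis_exists by blast
  have "vec.span B = W" using B assms vec.span_subspace by blast
  thus ?thesis using card_span_indep[OF B(2)] B(4) by simp
qed



definition indl :: "('a::{field,finite}^'n) set \<Rightarrow> nat \<Rightarrow> ('a^'n) list set" where
  "indl W r = {xs. length xs = r \<and> distinct xs \<and> vec.independent (set xs) \<and> set xs \<subseteq> W}"

definition PP :: "real \<Rightarrow> nat \<Rightarrow> nat \<Rightarrow> real" where
  "PP q m r = (\<Prod>i<r. q ^ m - q ^ i)"

lemma indl_Suc:
  "indl W (Suc r) = (\<lambda>(xs,v). v#xs) ` (SIGMA xs:indl W r. W - vec.span (set xs))"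
proof
  show "indl W (Suc r) \<subseteq> (\<lambda>(xs,v). v#xs) ` (SIGMA xs:indl W r. W - vec.span (set xs))"
  proof
    fix ys assume ys: "ys \<in> indl W (Suc r)"
    then obtain v xs where ys_eq: "ys = v # xs" unfolding indl_def by (cases ys) auto
    from ys have "v \<notin> set xs" "vec.independent (insert v (set xs))"
      unfolding indl_def ys_eq by auto
    hence "vec.independent (set xs)" "v \<notin> vec.span (set xs)"
      by (simp_all add: vec.independent_insert)
    with ys show "ys \<in> (\<lambda>(xs,v). v#xs) ` (SIGMA xs:indl W r. W - vec.span (set xs))"
      unfolding indl_def ys_eq by (intro image_eqI[of _ _ "(xs,v)"]) auto
  qed
next
  show "(\<lambda>(xs,v). v#xs) ` (SIGMA xs:indl W r. W - vec.span (set xs)) \<subseteq> indl W (Suc r)"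
  proof clarify
    fix xs v assume xs: "xs \<in> indl W r" and v: "v \<in> W" "v \<notin> vec.span (set xs)"
    have "v \<notin> set xs" using v vec.span_superset by blast
    with xs v show "v # xs \<in> indl W (Suc r)"
      unfolding indl_def by (auto simp: vec.independent_insert)
  qed
qed

lemma card_indl:
  fixes W :: "('a::{field,finite}^'n) set"
  assumes W: "vec.subspace W"
  shows "r \<le> vec.dim W \<Longrightarrow> real (card (indl W r)) = PP (real CARD('a)) (vec.dim W) r"
proof (induction r)
  case 0
  have "indl W 0 = {[]}" unfolding indl_def by (auto simp: vec.independent_empty)
  then show ?case by (simp add: PP_def)
next
  case (Suc r)
  let ?q = "CARD('a)" and ?m = "vec.dim W"
  have "finite {xs::('a^'n) list. set xs \<subseteq> UNIV \<and> length xs = r}"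
    by (rule finite_lists_length_eq) simp
  hence fin: "finite (indl W r)" by (rule finite_subset[rotated]) (auto simp: indl_def)
  have inj: "inj_on (\<lambda>(xs,v). v#xs) (SIGMA xs:indl W r. W - vec.span (set xs))"
    by (auto simp: inj_on_def)
  have each: "card (W - vec.span (set xs)) = ?q ^ ?m - ?q ^ r" if xs: "xs \<in> indl W r" for xs
  proof -
    have sub: "vec.span (set xs) \<subseteq> W" using xs W vec.span_minimal unfolding indl_def by blast
    have "card (vec.span (set xs)) = ?q ^ r"
      using xs card_span_indep[of "set xs"] distinct_card[of xs] unfolding indl_def by auto
    then show ?thesis using card_Diff_subset[OF finite_class.finite sub] card_subspace[OF W] by simp
  qed
  have le: "?q ^ r \<le> ?q ^ ?m" using Suc.prems by (intro power_increasing) auto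
  have "card (indl W (Suc r)) = card (SIGMA xs:indl W r. W - vec.span (set xs))"
    unfolding indl_Suc using inj by (simp add: card_image)
  also have "\<dots> = (\<Sum>xs\<in>indl W r. card (W - vec.span (set xs)))"
    using fin by (simp add: card_SigmaI)
  also have "\<dots> = card (indl W r) * (?q ^ ?m - ?q ^ r)" using each by simp
  finally have "real (card (indl W (Suc r))) = real (card (indl W r)) * (real ?q ^ ?m - real ?q ^ r)"
    using le by (simp add: of_nat_diff)
  then show ?case using Suc by (simp add: PP_def)
qed



lemma count_sub:
  fixes W :: "('a::{field,finite}^'n) set"
  assumes W: "vec.subspace W" and r: "r \<le> vec.dim W"
  shows "real (card {C. vec.subspace C \<and> vec.dim C = r \<and> C \<subseteq> W}) * PP (real CARD('a)) r r
         = PP (real CARD('a)) (vec.dim W) r"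
proof -
  let ?X = "{C. vec.subspace C \<and> vec.dim C = r \<and> C \<subseteq> W}"
  have eq: "indl W r = (\<Union>C\<in>?X. indl C r)"
  proof
    show "indl W r \<subseteq> (\<Union>C\<in>?X. indl C r)"
    proof
      fix xs assume xs: "xs \<in> indl W r"
      let ?C = "vec.span (set xs)"
      have "vec.dim ?C = r" using xs distinct_card[of xs]
        unfolding indl_def by (simp add: vec.dim_eq_card_independent)
      moreover have "?C \<subseteq> W" using xs W vec.span_minimal unfolding indl_def by blast
      moreover have "xs \<in> indl ?C r" using xs vec.span_superset unfolding indl_def by auto
      ultimately show "xs \<in> (\<Union>C\<in>?X. indl C r)" by blast
    qed
  next
    show "(\<Union>C\<in>?X. indl C r) \<subseteq> indl W r" unfolding indl_def by auto
  qed
  have spanC: "vec.span (set xs) = C" if "C \<in> ?X" "xs \<in> indl C r" for C xs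
  proof -
    have "vec.dim (vec.span (set xs)) = r" using that distinct_card[of xs]
      unfolding indl_def by (simp add: vec.dim_eq_card_independent)
    moreover have "vec.span (set xs) \<subseteq> C" using that vec.span_minimal unfolding indl_def by blast
    ultimately show ?thesis using that vec.subspace_dim_equal[of "vec.span (set xs)" C] by auto
  qed
  have fins: "finite (indl C r)" for C :: "('a^'n) set"
  proof -
    have "finite {xs::('a^'n) list. set xs \<subseteq> UNIV \<and> length xs = r}"
      by (rule finite_lists_length_eq) simp
    thus ?thesis by (rule finite_subset[rotated]) (auto simp: indl_def)
  qed
  have "card (indl W r) = (\<Sum>C\<in>?X. card (indl C r))"
    unfolding eq
  proof (rule card_UN_disjoint)
    show "finite ?X" by simp
    show "\<forall>C\<in>?X. finite (indl C r)" by (simp add: fins)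
    show "\<forall>C\<in>?X. \<forall>C'\<in>?X. C \<noteq> C' \<longrightarrow> indl C r \<inter> indl C' r = {}"
      using spanC by blast
  qed
  hence "real (card (indl W r)) = (\<Sum>C\<in>?X. real (card (indl C r)))" by simp
  also have "\<dots> = (\<Sum>C\<in>?X. PP (real CARD('a)) r r)"
    by (rule sum.cong) (auto simp: card_indl)
  finally show ?thesis using card_indl[OF W r] by simp
qed

lemma PP_shift: "PP q (Suc m) (Suc r) = (q ^ Suc m - 1) * q ^ r * PP q m r"
proof -
  have "PP q (Suc m) (Suc r) = (q ^ Suc m - 1) * (\<Prod>i<r. q ^ Suc m - q ^ Suc i)"
    unfolding PP_def by (subst prod.lessThan_Suc_shift) simp
  also have "(\<Prod>i<r. q ^ Suc m - q ^ Suc i) = (\<Prod>i<r. q * (q ^ m - q ^ i))"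
    by (simp add: algebra_simps)
  also have "\<dots> = q ^ r * PP q m r" by (simp add: prod.distrib PP_def)
  finally show ?thesis by simp
qed

lemma PP_hyp: "PP q (Suc r) r * (q - 1) = (q ^ Suc r - 1) * PP q r r"
proof (induction r)
  case 0
  then show ?case by (simp add: PP_def)
next
  case (Suc r)
  have "PP q (Suc (Suc r)) (Suc r) * (q - 1) = (q ^ Suc (Suc r) - 1) * q ^ r * (PP q (Suc r) r * (q - 1))"
    by (simp add: PP_shift)
  also have "\<dots> = (q ^ Suc (Suc r) - 1) * q ^ r * ((q ^ Suc r - 1) * PP q r r)" using Suc by simp
  also have "\<dots> = (q ^ Suc (Suc r) - 1) * PP q (Suc r) (Suc r)" by (simp add: PP_shift)
  finally show ?case .
qed

lemma PP_pos: "q > 1 \<Longrightarrow> PP q r r > 0"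
  unfolding PP_def by (intro prod_pos) (auto intro: power_strict_increasing)

lemma qgt1: "real CARD('a::{field,finite}) > 1"
  using card_field_ge2[where 'a='a] by linarith

lemma count_hyp:
  fixes A :: "('a::{field,finite}^'n) set"
  assumes A: "vec.subspace A" and j: "vec.dim A = j" "1 \<le> j"
  shows "real (card {C. vec.subspace C \<and> vec.dim C = j - 1 \<and> C \<subseteq> A})
     = (real CARD('a) ^ j - 1) / (real CARD('a) - 1)"
proof -
  let ?q = "real CARD('a)"
  obtain r where r: "j = Suc r" using j by (cases j) auto
  have q: "?q > 1" by (rule qgt1)
  have "real (card {C. vec.subspace C \<and> vec.dim C = r \<and> C \<subseteq> A}) * PP ?q r r = PP ?q (Suc r) r"
    using count_sub[OF A, of r] j r by simp
  hence "real (card {C. vec.subspace C \<and> vec.dim C = r \<and> C \<subseteq> A}) * PP ?q r r * (?q - 1)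
     = (?q ^ Suc r - 1) * PP ?q r r" using PP_hyp[of ?q r] by simp
  moreover have "PP ?q r r > 0" using PP_pos q by blast
  ultimately have "real (card {C. vec.subspace C \<and> vec.dim C = r \<and> C \<subseteq> A}) * (?q - 1) = ?q ^ Suc r - 1"
    by (metis (no_types, lifting) mult.commute mult.left_commute mult_cancel_left order_less_irrefl)
  then show ?thesis using q r by (simp add: field_simps)
qed

lemma count_up:
  fixes B :: "('a::{field,finite}^'n) set"
  assumes B: "vec.subspace B" and j: "vec.dim B = j"
  shows "real (card {A. vec.subspace A \<and> vec.dim A = Suc j \<and> B \<subseteq> A})
     = (real CARD('a) ^ (CARD('n) - j) - 1) / (real CARD('a) - 1)"
proof -
  let ?q = "real CARD('a)" and ?X = "{A. vec.subspace A \<and> vec.dim A = Suc j \<and> B \<subseteq> A}"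
  have q: "?q > 1" by (rule qgt1)
  have jn: "j \<le> CARD('n)" using j dim_subset_UNIV_cart_gen[of B] by simp
  have spB: "vec.span B = B" using B by simp
  have uniq: "A = vec.span (insert v B)" if "A \<in> ?X" "v \<in> A" "v \<notin> B" for A v
  proof -
    have "vec.span (insert v B) \<subseteq> A" using that vec.span_minimal[of "insert v B" A] by auto
    moreover have "vec.dim (vec.span (insert v B)) = Suc j"
      using that B j by (simp add: vec.dim_insert spB)
    ultimately show ?thesis using that vec.subspace_dim_equal[of "vec.span (insert v B)" A] by auto
  qed
  have eq: "UNIV - B = (\<Union>A\<in>?X. A - B)"
  proof
    show "UNIV - B \<subseteq> (\<Union>A\<in>?X. A - B)"
    proof
      fix v assume "v \<in> UNIV - B"
      hence v: "v \<notin> B" by simp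
      have "vec.span (insert v B) \<in> ?X" using v B j
        by (auto simp: vec.dim_insert spB intro: vec.span_mono[of B "insert v B", THEN subsetD] vec.span_superset[THEN subsetD])
      moreover have "v \<in> vec.span (insert v B)" by (simp add: vec.span_base)
      ultimately show "v \<in> (\<Union>A\<in>?X. A - B)" using v by blast
    qed
  qed auto
  have "card (UNIV - B) = (\<Sum>A\<in>?X. card (A - B))"
    unfolding eq
  proof (rule card_UN_disjoint)
    show "finite ?X" by simp
    show "\<forall>A\<in>?X. finite (A - B)" by simp
    show "\<forall>A\<in>?X. \<forall>A'\<in>?X. A \<noteq> A' \<longrightarrow> (A - B) \<inter> (A' - B) = {}"
    proof (intro ballI impI)
      fix A A' assume "A \<in> ?X" "A' \<in> ?X" "A \<noteq> A'"
      thus "(A - B) \<inter> (A' - B) = {}" using uniq[of A] uniq[of A'] by blast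
    qed
  qed
  also have "\<dots> = (\<Sum>A\<in>?X. CARD('a) ^ Suc j - CARD('a) ^ j)"
    by (rule sum.cong) (auto simp: card_Diff_subset card_subspace B j)
  finally have "card (UNIV - B) = card ?X * (CARD('a) ^ Suc j - CARD('a) ^ j)" by simp
  moreover have "card (UNIV - B) = CARD('a) ^ CARD('n) - CARD('a) ^ j"
    by (simp add: card_Diff_subset card_subspace B j)
  ultimately have "card ?X * (CARD('a) ^ Suc j - CARD('a) ^ j) = CARD('a) ^ CARD('n) - CARD('a) ^ j"
    by simp
  hence "real (card ?X) * (?q ^ Suc j - ?q ^ j) = ?q ^ CARD('n) - ?q ^ j"
  proof -
    have c1: "CARD('a) \<ge> 1" using card_field_ge2[where 'a='a] by linarith
    have le1: "CARD('a) ^ j \<le> CARD('a) ^ Suc j" using c1 by (intro power_increasing) auto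
    have le2: "CARD('a) ^ j \<le> CARD('a) ^ CARD('n)" using c1 jn by (intro power_increasing) auto
    from arg_cong[OF \<open>card ?X * (CARD('a) ^ Suc j - CARD('a) ^ j) = CARD('a) ^ CARD('n) - CARD('a) ^ j\<close>, of real]
    show ?thesis by (simp only: of_nat_mult of_nat_diff[OF le1] of_nat_diff[OF le2] of_nat_power)
  qed
  moreover have "?q ^ CARD('n) = ?q ^ j * ?q ^ (CARD('n) - j)" using jn by (simp flip: power_add)
  ultimately have "real (card ?X) * (?q ^ j * (?q - 1)) = ?q ^ j * (?q ^ (CARD('n) - j) - 1)"
    by (simp add: algebra_simps)
  moreover have "?q ^ j > 0" using q by simp
  ultimately have "real (card ?X) * (?q - 1) = ?q ^ (CARD('n) - j) - 1"
    by (metis (no_types, lifting) mult.commute mult.left_commute mult_cancel_left order_less_irrefl)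
  then show ?thesis using q by (simp add: field_simps)
qed



lemma mem_L: "A \<in> subspaces_of_dim j \<longleftrightarrow> vec.subspace A \<and> vec.dim A = j"
  by (simp add: subspaces_of_dim_def)

lemma F3:
  fixes B B' :: "('a::{field,finite}^'n) set"
  assumes B: "B \<in> subspaces_of_dim j" and B': "B' \<in> subspaces_of_dim j" and ne: "B \<noteq> B'" and j: "1 \<le> j"
  shows "card {A \<in> subspaces_of_dim (Suc j). B \<subseteq> A \<and> B' \<subseteq> A}
       = card {C \<in> subspaces_of_dim (j - 1). C \<subseteq> B \<and> C \<subseteq> B'}"
proof -
  let ?s = "{x + y |x y. x \<in> B \<and> y \<in> B'}" and ?I = "B \<inter> B'"
  have sB: "vec.subspace B" "vec.dim B = j" and sB': "vec.subspace B'" "vec.dim B' = j"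
    using B B' by (auto simp: mem_L)
  have ds: "vec.dim ?s + vec.dim ?I = j + j" using vec.dim_sums_Int[OF sB(1) sB'(1)] sB sB' by simp
  have ss: "vec.subspace ?s" by (rule vec.subspace_sums[OF sB(1) sB'(1)])
  have sI: "vec.subspace ?I" by (rule vec.subspace_inter[OF sB(1) sB'(1)])
  have dIle: "vec.dim ?I \<le> j" using vec.dim_subset[of ?I B] sB by auto
  have dIne: "vec.dim ?I \<noteq> j"
  proof
    assume "vec.dim ?I = j"
    hence "?I = B" "?I = B'" using vec.subspace_dim_equal[OF sI sB(1)] vec.subspace_dim_equal[OF sI sB'(1)] sB sB' by auto
    with ne show False by simp
  qed
  have Bs: "B \<subseteq> ?s"
  proof
    fix x assume "x \<in> B" thus "x \<in> ?s" using vec.subspace_0[OF sB'(1)] by (intro CollectI exI[of _ x] exI[of _ 0]) auto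
  qed
  have B's: "B' \<subseteq> ?s"
  proof
    fix y assume "y \<in> B'" thus "y \<in> ?s" using vec.subspace_0[OF sB(1)] by (intro CollectI exI[of _ 0] exI[of _ y]) auto
  qed
  have sA: "?s \<subseteq> A" if "vec.subspace A" "B \<subseteq> A" "B' \<subseteq> A" for A
    using that vec.subspace_add by blast
  show ?thesis
  proof (cases "vec.dim ?I = j - 1")
    case True
    hence dsj: "vec.dim ?s = Suc j" using ds j by simp
    have X: "{A \<in> subspaces_of_dim (Suc j). B \<subseteq> A \<and> B' \<subseteq> A} = {?s}"
    proof (rule set_eqI, rule iffI)
      fix A assume "A \<in> {A \<in> subspaces_of_dim (Suc j). B \<subseteq> A \<and> B' \<subseteq> A}"
      hence A: "vec.subspace A" "vec.dim A = Suc j" "B \<subseteq> A" "B' \<subseteq> A" by (auto simp: mem_L)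
      have "?s = A" using vec.subspace_dim_equal[OF ss A(1) sA[OF A(1,3,4)]] A dsj by simp
      thus "A \<in> {?s}" by simp
    next
      fix A assume "A \<in> {?s}"
      thus "A \<in> {A \<in> subspaces_of_dim (Suc j). B \<subseteq> A \<and> B' \<subseteq> A}" using ss dsj Bs B's by (simp add: mem_L)
    qed
    have Y: "{C \<in> subspaces_of_dim (j - 1). C \<subseteq> B \<and> C \<subseteq> B'} = {?I}"
    proof (rule set_eqI, rule iffI)
      fix C assume "C \<in> {C \<in> subspaces_of_dim (j - 1). C \<subseteq> B \<and> C \<subseteq> B'}"
      hence C: "vec.subspace C" "vec.dim C = j - 1" "C \<subseteq> ?I" by (auto simp: mem_L)
      have "C = ?I" using vec.subspace_dim_equal[OF C(1) sI C(3)] C True by simp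
      thus "C \<in> {?I}" by simp
    next
      fix C assume "C \<in> {?I}"
      thus "C \<in> {C \<in> subspaces_of_dim (j - 1). C \<subseteq> B \<and> C \<subseteq> B'}" using sI True by (auto simp: mem_L)
    qed
    show ?thesis unfolding X Y by simp
  next
    case False
    hence dI: "vec.dim ?I < j - 1" using dIle dIne by linarith
    have X: "{A \<in> subspaces_of_dim (Suc j). B \<subseteq> A \<and> B' \<subseteq> A} = {}"
    proof (rule equals0I)
      fix A assume "A \<in> {A \<in> subspaces_of_dim (Suc j). B \<subseteq> A \<and> B' \<subseteq> A}"
      hence A: "vec.subspace A" "vec.dim A = Suc j" "B \<subseteq> A" "B' \<subseteq> A" by (auto simp: mem_L)
      have "vec.dim ?s \<le> vec.dim A" using vec.dim_subset[OF sA[OF A(1,3,4)]] .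
      thus False using A ds dI by linarith
    qed
    have Y: "{C \<in> subspaces_of_dim (j - 1). C \<subseteq> B \<and> C \<subseteq> B'} = {}"
    proof (rule equals0I)
      fix C assume "C \<in> {C \<in> subspaces_of_dim (j - 1). C \<subseteq> B \<and> C \<subseteq> B'}"
      hence C: "vec.subspace C" "vec.dim C = j - 1" "C \<subseteq> ?I" by (auto simp: mem_L)
      have "vec.dim C \<le> vec.dim ?I" using vec.dim_subset[OF C(3)] .
      thus False using C dI by linarith
    qed
    show ?thesis unfolding X Y by simp
  qed
qed

definition Dn :: "nat \<Rightarrow> (('a::{field,finite}^'n) set \<Rightarrow> real) \<Rightarrow> ('a^'n) set \<Rightarrow> real" where
  "Dn j f C = (\<Sum>A\<in>subspaces_of_dim j. if C \<subseteq> A then f A else 0)"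

definition Up :: "nat \<Rightarrow> (('a::{field,finite}^'n) set \<Rightarrow> real) \<Rightarrow> ('a^'n) set \<Rightarrow> real" where
  "Up j g A = (\<Sum>C\<in>subspaces_of_dim (j - 1). if C \<subseteq> A then g C else 0)"

definition ip :: "nat \<Rightarrow> (('a::{field,finite}^'n) set \<Rightarrow> real) \<Rightarrow> (('a^'n) set \<Rightarrow> real) \<Rightarrow> real" where
  "ip j f g = (\<Sum>A\<in>subspaces_of_dim j. f A * g A)"

lemma finite_L [simp]: "finite (subspaces_of_dim j :: ('a::{field,finite}^'n) set set)"
  by simp

lemma double_count:
  assumes "finite X" "finite Y"
  shows "(\<Sum>x\<in>X. if P x then (\<Sum>y\<in>Y. if Q x y then h y else 0) else (0::real))
       = (\<Sum>y\<in>Y. h y * real (card {x\<in>X. P x \<and> Q x y}))"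
proof -
  have "(\<Sum>x\<in>X. if P x then (\<Sum>y\<in>Y. if Q x y then h y else 0) else (0::real))
      = (\<Sum>x\<in>X. \<Sum>y\<in>Y. if P x \<and> Q x y then h y else 0)"
    by (rule sum.cong) auto
  also have "\<dots> = (\<Sum>y\<in>Y. \<Sum>x\<in>X. if P x \<and> Q x y then h y else 0)" by (rule sum.swap)
  also have "\<dots> = (\<Sum>y\<in>Y. h y * real (card {x\<in>X. P x \<and> Q x y}))"
  proof (rule sum.cong[OF refl])
    fix y
    have "(\<Sum>x\<in>X. if P x \<and> Q x y then h y else 0) = (\<Sum>x\<in>{x\<in>X. P x \<and> Q x y}. h y)"
      using sum.inter_filter[OF assms(1), of "\<lambda>_. h y" "\<lambda>x. P x \<and> Q x y"] by simp
    thus "(\<Sum>x\<in>X. if P x \<and> Q x y then h y else 0) = h y * real (card {x\<in>X. P x \<and> Q x y})" by simp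
  qed
  finally show ?thesis .
qed

lemma adjoint: "ip (j - 1) (Dn j f) g = ip j f (Up j g)"
proof -
  have "ip (j - 1) (Dn j f) g = (\<Sum>C\<in>subspaces_of_dim (j-1). \<Sum>A\<in>subspaces_of_dim j. if C \<subseteq> A then f A * g C else 0)"
    unfolding ip_def Dn_def sum_distrib_right by (intro sum.cong refl) auto
  also have "\<dots> = (\<Sum>A\<in>subspaces_of_dim j. \<Sum>C\<in>subspaces_of_dim (j-1). if C \<subseteq> A then f A * g C else 0)"
    by (rule sum.swap)
  also have "\<dots> = ip j f (Up j g)"
    unfolding ip_def Up_def sum_distrib_left by (intro sum.cong refl) auto
  finally show ?thesis .
qed



lemma cntY:
  fixes B :: "('a::{field,finite}^'n) set"
  assumes "B \<in> subspaces_of_dim j" "1 \<le> j"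
  shows "real (card {C \<in> subspaces_of_dim (j - 1). C \<subseteq> B}) = (real CARD('a) ^ j - 1) / (real CARD('a) - 1)"
proof -
  have "{C \<in> subspaces_of_dim (j - 1). C \<subseteq> B} = {C. vec.subspace C \<and> vec.dim C = j - 1 \<and> C \<subseteq> B}"
    by (auto simp: mem_L)
  thus ?thesis using count_hyp[of B j] assms by (simp add: mem_L)
qed

lemma cntX:
  fixes B :: "('a::{field,finite}^'n) set"
  assumes "B \<in> subspaces_of_dim j"
  shows "real (card {A \<in> subspaces_of_dim (Suc j). B \<subseteq> A}) = (real CARD('a) ^ (CARD('n) - j) - 1) / (real CARD('a) - 1)"
proof -
  have "{A \<in> subspaces_of_dim (Suc j). B \<subseteq> A} = {A. vec.subspace A \<and> vec.dim A = Suc j \<and> B \<subseteq> A}"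
    by (auto simp: mem_L)
  thus ?thesis using count_up[of B j] assms by (simp add: mem_L)
qed

lemma comm:
  fixes B :: "('a::{field,finite}^'n) set" and h :: "('a^'n) set \<Rightarrow> real"
  assumes B: "B \<in> subspaces_of_dim j" and j: "1 \<le> j"
  shows "Dn (Suc j) (Up (Suc j) h) B = Up j (Dn j h) B
     + ((real CARD('a) ^ (CARD('n) - j) - 1) / (real CARD('a) - 1) - (real CARD('a) ^ j - 1) / (real CARD('a) - 1)) * h B"
proof -
  let ?L = "subspaces_of_dim j :: ('a^'n) set set"
  let ?cX = "\<lambda>B'. real (card {A \<in> subspaces_of_dim (Suc j). B \<subseteq> A \<and> B' \<subseteq> A})"
  let ?cY = "\<lambda>B'. real (card {C \<in> subspaces_of_dim (j - 1). C \<subseteq> B \<and> C \<subseteq> B'})"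
  have e1: "Dn (Suc j) (Up (Suc j) h) B = (\<Sum>B'\<in>?L. h B' * ?cX B')"
    unfolding Dn_def Up_def diff_Suc_1 by (rule double_count) simp_all
  have e2: "Up j (Dn j h) B = (\<Sum>B'\<in>?L. h B' * ?cY B')"
    unfolding Dn_def Up_def by (rule double_count) simp_all
  have "Dn (Suc j) (Up (Suc j) h) B - Up j (Dn j h) B = (\<Sum>B'\<in>?L. h B' * (?cX B' - ?cY B'))"
    unfolding e1 e2 by (simp add: sum_subtractf algebra_simps)
  also have "\<dots> = h B * (?cX B - ?cY B) + (\<Sum>B'\<in>?L - {B}. h B' * (?cX B' - ?cY B'))"
    using B by (simp add: sum.remove)
  also have "(\<Sum>B'\<in>?L - {B}. h B' * (?cX B' - ?cY B')) = 0"
    by (rule sum.neutral) (use F3[OF B _ _ j] in auto)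
  also have "?cX B = (real CARD('a) ^ (CARD('n) - j) - 1) / (real CARD('a) - 1)"
    using cntX[OF B] by simp
  also have "?cY B = (real CARD('a) ^ j - 1) / (real CARD('a) - 1)"
    using cntY[OF B j] by simp
  finally show ?thesis by (simp add: algebra_simps)
qed



definition lam :: "real \<Rightarrow> nat \<Rightarrow> nat \<Rightarrow> real" where
  "lam q n j = q * (q ^ (j - 1) - 1) * (q ^ (n - j) - 1) / (q - 1)^2"

lemma lam_step:
  assumes q: "q > 1" and j: "1 \<le> j" "Suc j \<le> n"
  shows "lam q n (Suc j) = lam q n j + ((q ^ (n - j) - 1) / (q - 1) - (q ^ j - 1) / (q - 1))"
proof -
  obtain s where s: "j = Suc s" using j by (cases j) auto
  obtain t where t: "n - Suc (Suc s) = t" by simp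
  have nj: "n - Suc s = Suc t" using t j s by simp
  have q1: "q - 1 \<noteq> 0" using q by simp
  have q2: "1 + q * q - q * 2 \<noteq> 0" proof -
    have "1 + q * q - q * 2 = (q - 1) * (q - 1)" by (simp add: algebra_simps)
    thus ?thesis using q1 by simp
  qed
  have key: "q*(q^Suc s - 1)*(q^t - 1) = q*(q^s-1)*(q^Suc t - 1) + (q-1)*((q^Suc t - 1) - (q^Suc s - 1))"
    by (simp add: algebra_simps)
  have "lam q n (Suc j) = q*(q^Suc s - 1)*(q^t - 1) / (q-1)^2"
    unfolding lam_def s diff_Suc_1 t by simp
  also have "\<dots> = (q*(q^s-1)*(q^Suc t - 1) + (q-1)*((q^Suc t - 1) - (q^Suc s - 1))) / (q-1)^2"
    using key by simp
  also have "\<dots> = q*(q^s-1)*(q^Suc t - 1)/(q-1)^2 + ((q^Suc t - 1) - (q^Suc s - 1)) / (q-1)"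
    using q1 by (simp add: add_divide_distrib power2_eq_square)
  also have "\<dots> = lam q n j + ((q ^ (n - j) - 1) / (q - 1) - (q ^ j - 1) / (q - 1))"
    unfolding lam_def s diff_Suc_1 nj by (simp add: diff_divide_distrib)
  finally show ?thesis .
qed

lemma lam_nonneg:
  assumes q: "q > 1"
  shows "lam q n j \<ge> 0"
proof -
  have "q ^ (j - 1) \<ge> 1" "q ^ (n - j) \<ge> 1" using q by (simp_all add: one_le_power)
  thus ?thesis unfolding lam_def using q by (intro divide_nonneg_pos mult_nonneg_nonneg) auto
qed

lemma ip_comm: "ip j f g = ip j g f"
  unfolding ip_def by (simp add: mult.commute)

lemma ip_self_nonneg: "ip j f f \<ge> 0"
  unfolding ip_def by (intro sum_nonneg) simp

lemma Up_one:
  fixes A :: "('a::{field,finite}^'n) set"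
  shows "Up j (\<lambda>_. 1) A = real (card {C \<in> subspaces_of_dim (j - 1). C \<subseteq> A})"
  unfolding Up_def using sum.inter_filter[of "subspaces_of_dim (j - 1) :: ('a^'n) set set" "\<lambda>_. 1::real" "\<lambda>C. C \<subseteq> A"]
  by simp

lemma sum_Dn:
  fixes g :: "('a::{field,finite}^'n) set \<Rightarrow> real"
  assumes j: "1 \<le> j"
  shows "(\<Sum>C\<in>subspaces_of_dim (j - 1). Dn j g C)
       = (real CARD('a) ^ j - 1) / (real CARD('a) - 1) * (\<Sum>A\<in>subspaces_of_dim j. g A)"
proof -
  have "(\<Sum>C\<in>subspaces_of_dim (j - 1). Dn j g C) = ip (j - 1) (Dn j g) (\<lambda>_. 1)"
    unfolding ip_def by simp
  also have "\<dots> = ip j g (Up j (\<lambda>_. 1))" by (rule adjoint)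
  also have "\<dots> = (\<Sum>A\<in>subspaces_of_dim j. g A * ((real CARD('a) ^ j - 1) / (real CARD('a) - 1)))"
    unfolding ip_def
  proof (rule sum.cong[OF refl])
    fix A :: "('a^'n) set" assume A: "A \<in> subspaces_of_dim j"
    have "Up j (\<lambda>_. 1) A = (real CARD('a) ^ j - 1) / (real CARD('a) - 1)"
      using Up_one[of j A] cntY[OF A j] by simp
    thus "g A * Up j (\<lambda>_. 1) A = g A * ((real CARD('a) ^ j - 1) / (real CARD('a) - 1))" by simp
  qed
  finally show ?thesis by (simp add: sum_divide_distrib[symmetric] sum_distrib_right[symmetric] mult.commute)
qed

lemma spec:
  fixes g :: "('a::{field,finite}^'n) set \<Rightarrow> real"
  assumes "1 \<le> j" "j \<le> CARD('n)" "(\<Sum>A\<in>subspaces_of_dim j. g A) = 0"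
  shows "ip (j - 1) (Dn j g) (Dn j g) \<le> lam (real CARD('a)) CARD('n) j * ip j g g"
  using assms
proof (induction j arbitrary: g rule: nat_induct_at_least)
  case base
  have "Dn 1 g C = 0" if "C \<in> subspaces_of_dim 0" for C
  proof -
    have C0: "C \<subseteq> {0}" using that by (simp add: mem_L)
    have "Dn 1 g C = (\<Sum>A\<in>subspaces_of_dim 1. g A)"
      unfolding Dn_def by (rule sum.cong[OF refl]) (use C0 vec.subspace_0 in \<open>auto simp: mem_L\<close>)
    thus ?thesis using base.prems by simp
  qed
  hence "ip 0 (Dn 1 g) (Dn 1 g) = 0" unfolding ip_def by simp
  moreover have "lam (real CARD('a)) CARD('n) 1 = 0" by (simp add: lam_def)
  ultimately show ?case by simp
next
  case (Suc j)
  let ?q = "real CARD('a)" and ?n = "CARD('n)"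
  define c where "c = (?q ^ (?n - j) - 1) / (?q - 1) - (?q ^ j - 1) / (?q - 1)"
  let ?\<Lambda> = "lam ?q ?n (Suc j)"
  have q: "?q > 1" by (rule qgt1)
  define h where "h = Dn (Suc j) g"
  define U where "U = Up (Suc j) h"
  have sumh: "(\<Sum>B\<in>subspaces_of_dim j. h B) = 0"
    using sum_Dn[of "Suc j" g] Suc.prems unfolding h_def by simp
  have IH: "ip (j - 1) (Dn j h) (Dn j h) \<le> lam ?q ?n j * ip j h h"
    using Suc.IH[OF _ sumh] Suc.prems by simp
  have "ip (Suc j) U U = ip j (Dn (Suc j) U) h"
    using adjoint[of "Suc j" U h] unfolding U_def by simp
  also have "\<dots> = (\<Sum>B\<in>subspaces_of_dim j. (Up j (Dn j h) B + c * h B) * h B)"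
    unfolding ip_def U_def by (rule sum.cong[OF refl]) (simp add: comm[OF _ Suc.hyps] c_def)
  also have "\<dots> = (\<Sum>B\<in>subspaces_of_dim j. Up j (Dn j h) B * h B) + (\<Sum>B\<in>subspaces_of_dim j. c * (h B * h B))"
    by (simp only: distrib_right mult.assoc sum.distrib)
  also have "\<dots> = ip j (Up j (Dn j h)) h + c * ip j h h"
    unfolding ip_def by (simp only: sum_distrib_left)
  also have "ip j (Up j (Dn j h)) h = ip (j - 1) (Dn j h) (Dn j h)"
    using adjoint[of j h "Dn j h"] by (simp add: ip_comm)
  finally have UU: "ip (Suc j) U U \<le> ?\<Lambda> * ip j h h"
    using IH lam_step[OF q Suc.hyps Suc.prems(1)] unfolding c_def[symmetric] by (simp add: algebra_simps)
  have hh: "ip j h h = ip (Suc j) g U"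
    using adjoint[of "Suc j" g h] unfolding h_def U_def by simp
  have CS: "(ip (Suc j) g U)^2 \<le> ip (Suc j) g g * ip (Suc j) U U"
    unfolding ip_def using Cauchy_Schwarz_ineq_sum[of g U "subspaces_of_dim (Suc j)"]
    by (simp add: power2_eq_square)
  have L0: "?\<Lambda> \<ge> 0" by (rule lam_nonneg[OF q])
  have G0: "ip (Suc j) g g \<ge> 0" by (rule ip_self_nonneg)
  have H0: "ip j h h \<ge> 0" by (rule ip_self_nonneg)
  have main: "ip j h h * ip j h h \<le> ip j h h * (?\<Lambda> * ip (Suc j) g g)"
  proof -
    have "ip j h h * ip j h h \<le> ip (Suc j) g g * ip (Suc j) U U"
      using CS hh by (simp add: power2_eq_square)
    also have "\<dots> \<le> ip (Suc j) g g * (?\<Lambda> * ip j h h)"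
      using UU G0 by (intro mult_left_mono) auto
    finally show ?thesis by (simp add: algebra_simps)
  qed
  have "ip j h h \<le> ?\<Lambda> * ip (Suc j) g g"
  proof (cases "ip j h h = 0")
    case True thus ?thesis using L0 G0 by simp
  next
    case False
    hence "ip j h h > 0" using H0 by simp
    thus ?thesis using main by (simp add: mult_le_cancel_left_pos)
  qed
  thus ?case unfolding h_def by simp
qed



lemma final_alg:
  fixes a b N M s X lam z :: real
  assumes a: "a > 0" and b: "b > 0" and N: "N > 0" and s: "s > 0" and sN: "s \<le> N"
    and lam: "lam \<ge> 0" and MN: "M * b = N * a" and X: "X \<ge> 0"
    and ineq: "(a * s)^2 \<le> X * (lam * (s - s^2 / N) + (s / N)^2 * b^2 * M)"
    and mu: "s / N = 1 / (1 + z)" and z: "z \<ge> 0"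
  shows "X / M \<ge> 1 / (1 + lam / (a * b) * z)"
proof -
  have M: "M = N * a / b" using MN b by (simp add: field_simps)
  have Mpos: "M > 0" unfolding M using N a b by simp
  have zz: "z = (N - s) / s" using mu s N z by (simp add: field_simps)
  define D where "D = a * b * s + lam * (N - s)"
  have D: "D > 0" unfolding D_def using a b s sN lam by (simp add: add_pos_nonneg)
  have Q: "lam * (s - s^2 / N) + (s / N)^2 * b^2 * M = s * D / N"
    unfolding D_def M using N b by (simp add: field_simps power2_eq_square)
  have "a^2 * s^2 \<le> X * (s * D / N)" using ineq Q by (simp add: power_mult_distrib)
  hence "a^2 * s^2 * N \<le> X * s * D" using N by (simp add: field_simps)
  hence "s * (a^2 * s * N) \<le> s * (X * D)" by (simp add: power2_eq_square algebra_simps)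
  hence key: "a^2 * s * N \<le> X * D" using s by simp
  have lhs: "1 / (1 + lam / (a * b) * z) = a * b * s / D"
    unfolding zz D_def using a b s by (simp add: field_simps)
  have "a * b * s / D \<le> X / M"
  proof -
    have eq: "a * b * s * M = a^2 * s * N" unfolding M using b by (simp add: field_simps power2_eq_square)
    have "a * b * s * M \<le> X * D" using eq key by linarith
    thus ?thesis using D Mpos by (simp add: divide_le_eq le_divide_eq mult.commute)
  qed
  thus ?thesis using lhs by simp
qed

lemma second_ineq:
  fixes q z :: real and k n :: nat
  assumes q: "q > 1" and k: "1 \<le> k" "k \<le> n" and z: "z \<ge> 0"
  shows "1 / (1 + (q * (q ^ (k - 1) - 1) * (q ^ (n - k) - 1)) / ((q ^ k - 1) * (q ^ (n - k + 1) - 1)) * z)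
           \<ge> 1 / (1 + z / q)"
proof -
  obtain k' where k': "k = Suc k'" using k by (cases k) auto
  let ?A = "q ^ k' - 1" and ?B = "q ^ (n - k) - 1" and ?C = "q ^ Suc k' - 1" and ?D = "q ^ Suc (n - k) - 1"
  have A0: "?A \<ge> 0" and B0: "?B \<ge> 0" using q by (simp_all add: one_le_power)
  have C0: "?C > 0" and D0: "?D > 0" using q by (simp_all add: one_less_power del: power_Suc)
  have qA: "q * ?A \<le> ?C" using q by (simp add: algebra_simps)
  have qB: "q * ?B \<le> ?D" using q by (simp add: algebra_simps)
  define c where "c = q * ?A * ?B / (?C * ?D)"
  have c0: "c \<ge> 0" unfolding c_def using q A0 B0 C0 D0 by simp
  have pr: "(q * ?A) * (q * ?B) \<le> ?C * ?D"
    using qA qB A0 B0 q C0 by (intro mult_mono) auto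
  have CD: "?C * ?D > 0" using C0 D0 by simp
  have "c * q = ((q * ?A) * (q * ?B)) / (?C * ?D)" unfolding c_def by (simp add: mult_ac)
  also have "\<dots> \<le> 1" using pr CD by (simp only: divide_le_eq_1_pos)
  finally have "c * q \<le> 1" .
  hence cq: "c \<le> 1 / q" using q by (simp add: field_simps)
  have "c * z \<le> z / q" using cq z by (metis divide_inverse inverse_eq_divide mult.commute mult_right_mono)
  moreover have "c * z \<ge> 0" using c0 z by simp
  ultimately have "1 / (1 + c * z) \<ge> 1 / (1 + z / q)"
    by (intro divide_left_mono) (auto intro: add_pos_nonneg)
  moreover have "c = (q * (q ^ (k - 1) - 1) * (q ^ (n - k) - 1)) / ((q ^ k - 1) * (q ^ (n - k + 1) - 1))"
    unfolding c_def k' by simp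
  ultimately show ?thesis by simp
qed



lemma Dn_one:
  fixes C :: "('a::{field,finite}^'n) set"
  shows "Dn j (\<lambda>_. 1) C = real (card {A \<in> subspaces_of_dim j. C \<subseteq> A})"
  unfolding Dn_def using sum.inter_filter[of "subspaces_of_dim j :: ('a^'n) set set" "\<lambda>_. 1::real" "\<lambda>A. C \<subseteq> A"]
  by simp

lemma frac_aux:
  fixes P C D d :: real
  assumes "d \<noteq> 0"
  shows "(P / d^2) / ((C / d) * (D / d)) = P / (C * D)"
proof -
  have e: "(C / d) * (D / d) = (C * D) / d^2" by (simp add: power2_eq_square)
  have d2: "d^2 \<noteq> 0" using assms by simp
  show ?thesis unfolding e using d2 by (simp add: divide_divide_eq_left divide_divide_eq_right)
qed

theorem theorem1:
  fixes S :: "('a::{field,finite} ^ 'n) set set" and k :: nat and z :: real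
  defines "q \<equiv> real CARD('a)" and "n \<equiv> CARD('n)"
  assumes "1 \<le> k" and "k \<le> n"
    and "S \<subseteq> subspaces_of_dim k"
    and "z \<ge> 0" and "mu k S = 1 / (1 + z)"
  shows "mu (k - 1) (shadow k S)
           \<ge> 1 / (1 + (q * (q ^ (k - 1) - 1) * (q ^ (n - k) - 1))
                     / ((q ^ k - 1) * (q ^ (n - k + 1) - 1)) * z)
         \<and> 1 / (1 + (q * (q ^ (k - 1) - 1) * (q ^ (n - k) - 1))
                 / ((q ^ k - 1) * (q ^ (n - k + 1) - 1)) * z)
           \<ge> 1 / (1 + z / q)"
proof
  have k1: "1 \<le> k" and kn: "k \<le> n" and SL: "S \<subseteq> subspaces_of_dim k" and z: "z \<ge> 0"
    and muS: "mu k S = 1 / (1 + z)" using assms by auto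
  have qq: "q > 1" unfolding q_def by (rule qgt1)
  show "1 / (1 + (q * (q ^ (k - 1) - 1) * (q ^ (n - k) - 1))
                 / ((q ^ k - 1) * (q ^ (n - k + 1) - 1)) * z)
           \<ge> 1 / (1 + z / q)" by (rule second_ineq[OF qq k1 kn z])
  let ?L = "subspaces_of_dim k :: ('a^'n) set set"
  let ?L' = "subspaces_of_dim (k - 1) :: ('a^'n) set set"
  define N where "N = real (card ?L)"
  define M where "M = real (card ?L')"
  define s where "s = real (card S)"
  define X where "X = real (card (shadow k S))"
  have muS': "s / N = 1 / (1 + z)" using muS unfolding mu_def N_def s_def by simp
  have rhs_pos: "1 / (1 + z) > 0" using z by simp
  have N0: "N > 0"
  proof -
    have "N \<noteq> 0" using muS' rhs_pos by auto
    moreover have "N \<ge> 0" unfolding N_def by simp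
    ultimately show ?thesis by linarith
  qed
  have s0: "s > 0"
  proof -
    have "s \<noteq> 0" using muS' rhs_pos by auto
    moreover have "s \<ge> 0" unfolding s_def by simp
    ultimately show ?thesis by linarith
  qed
  have sN: "s \<le> N" unfolding s_def N_def using SL by (simp add: card_mono)
  define a where "a = (q ^ k - 1) / (q - 1)"
  define b where "b = (q ^ (n - (k - 1)) - 1) / (q - 1)"
  have a0: "a > 0" unfolding a_def using qq k1 by (simp add: one_less_power)
  have b0: "b > 0" unfolding b_def using qq k1 kn by (simp add: one_less_power)
  have Dn1: "Dn k (\<lambda>_. 1) C = b" if "C \<in> ?L'" for C
  proof -
    have "Dn k (\<lambda>_. 1) C = real (card {A \<in> subspaces_of_dim (Suc (k - 1)). C \<subseteq> A})"
      using Dn_one[of k C] k1 by simp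
    also have "\<dots> = b" unfolding b_def q_def n_def by (rule cntX[OF that])
    finally show ?thesis .
  qed
  have Up1: "Up k (\<lambda>_. 1) A = a" if "A \<in> ?L" for A
    using Up_one[of k A] cntY[OF that k1] unfolding a_def q_def by simp
  have MN: "M * b = N * a"
  proof -
    have "ip (k - 1) (Dn k (\<lambda>_::('a^'n) set. 1::real)) (\<lambda>_. 1) = ip k (\<lambda>_. 1) (Up k (\<lambda>_::('a^'n) set. 1 :: real))"
      by (rule adjoint)
    moreover have "ip (k - 1) (Dn k (\<lambda>_::('a^'n) set. 1::real)) (\<lambda>_. 1) = M * b"
    proof -
      have "ip (k - 1) (Dn k (\<lambda>_::('a^'n) set. 1::real)) (\<lambda>_. 1) = (\<Sum>C\<in>?L'. b)"
        unfolding ip_def by (rule sum.cong[OF refl]) (simp add: Dn1)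
      thus ?thesis unfolding M_def by simp
    qed
    moreover have "ip k (\<lambda>_. 1) (Up k (\<lambda>_::('a^'n) set. 1 :: real)) = N * a"
    proof -
      have "ip k (\<lambda>_. 1) (Up k (\<lambda>_::('a^'n) set. 1 :: real)) = (\<Sum>A\<in>?L. a)"
        unfolding ip_def by (rule sum.cong[OF refl]) (simp add: Up1)
      thus ?thesis unfolding N_def by simp
    qed
    ultimately show ?thesis by simp
  qed
  define f where "f = (\<lambda>A. if A \<in> S then 1 else (0::real))"
  define \<mu> where "\<mu> = s / N"
  define g where "g = (\<lambda>A. f A - \<mu>)"
  have sumf: "(\<Sum>A\<in>?L. f A) = s"
  proof -
    have "(\<Sum>A\<in>?L. f A) = (\<Sum>A\<in>{A\<in>?L. A \<in> S}. 1)"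
      unfolding f_def using sum.inter_filter[of ?L "\<lambda>_. 1::real" "\<lambda>A. A \<in> S"] by simp
    also have "{A\<in>?L. A \<in> S} = S" using SL by auto
    finally show ?thesis unfolding s_def by simp
  qed
  have sumg: "(\<Sum>A\<in>?L. g A) = 0"
  proof -
    have "(\<Sum>A\<in>?L. g A) = (\<Sum>A\<in>?L. f A) - N * \<mu>" unfolding g_def N_def by (simp add: sum_subtractf)
    also have "\<dots> = 0" using sumf N0 unfolding \<mu>_def by simp
    finally show ?thesis .
  qed
  have ipgg: "ip k g g = s - s^2 / N"
  proof -
    have pt: "g A * g A = (1 - 2 * \<mu>) * f A + \<mu>^2" for A
      unfolding g_def f_def by (simp add: algebra_simps power2_eq_square)
    have "ip k g g = (1 - 2 * \<mu>) * s + N * \<mu>^2"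
      unfolding ip_def pt by (simp add: sum.distrib sum_distrib_left[symmetric] sumf N_def)
    thus ?thesis unfolding \<mu>_def using N0 by (simp add: field_simps power2_eq_square)
  qed
  have Dfg: "Dn k f C = Dn k g C + \<mu> * b" if "C \<in> ?L'" for C
  proof -
    have "Dn k f C = Dn k g C + \<mu> * Dn k (\<lambda>_. 1) C"
      unfolding Dn_def g_def sum_distrib_left sum.distrib[symmetric]
      by (rule sum.cong[OF refl]) auto
    thus ?thesis using Dn1[OF that] by simp
  qed
  have spec_k: "ip (k - 1) (Dn k g) (Dn k g) \<le> lam q n k * ip k g g"
    unfolding q_def n_def by (rule spec[OF k1 kn[unfolded n_def] sumg])
  have sumDg: "(\<Sum>C\<in>?L'. Dn k g C) = 0" using sum_Dn[OF k1, of g] sumg by simp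
  have sumDf: "(\<Sum>C\<in>?L'. Dn k f C) = a * s" using sum_Dn[OF k1, of f] sumf unfolding a_def q_def by simp
  have ipff: "ip (k - 1) (Dn k f) (Dn k f) = ip (k - 1) (Dn k g) (Dn k g) + \<mu>^2 * b^2 * M"
  proof -
    have "ip (k - 1) (Dn k f) (Dn k f) = (\<Sum>C\<in>?L'. Dn k g C * Dn k g C + (2 * \<mu> * b) * Dn k g C + \<mu>^2 * b^2)"
      unfolding ip_def by (rule sum.cong[OF refl]) (simp add: Dfg algebra_simps power2_eq_square)
    also have "\<dots> = ip (k - 1) (Dn k g) (Dn k g) + (2 * \<mu> * b) * (\<Sum>C\<in>?L'. Dn k g C) + \<mu>^2 * b^2 * M"
      unfolding ip_def M_def by (simp add: sum.distrib sum_distrib_left[symmetric])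
    finally show ?thesis using sumDg by simp
  qed
  have shL: "shadow k S \<subseteq> ?L'" unfolding shadow_def by auto
  have zero_out: "Dn k f C = 0" if "C \<in> ?L' - shadow k S" for C
    unfolding Dn_def
  proof (rule sum.neutral, rule ballI)
    fix A assume A: "A \<in> ?L"
    show "(if C \<subseteq> A then f A else 0) = 0"
    proof (cases "C \<subseteq> A \<and> A \<in> S")
      case True
      have "C \<noteq> A" using that A k1 by (auto simp: mem_L)
      hence "C \<in> shadow k S" using True that unfolding shadow_def by auto
      with that show ?thesis by simp
    next
      case False thus ?thesis unfolding f_def by auto
    qed
  qed
  have CS: "(a * s)^2 \<le> X * ip (k - 1) (Dn k f) (Dn k f)"
  proof -
    have "(\<Sum>C\<in>?L'. Dn k f C) = (\<Sum>C\<in>shadow k S. Dn k f C)"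
      by (rule sum.mono_neutral_right) (use shL zero_out in auto)
    also have "\<dots> = (\<Sum>C\<in>shadow k S. 1 * Dn k f C)" by simp
    finally have "(a * s)^2 = (\<Sum>C\<in>shadow k S. 1 * Dn k f C)^2" using sumDf by simp
    also have "\<dots> \<le> (\<Sum>C\<in>shadow k S. 1^2) * (\<Sum>C\<in>shadow k S. (Dn k f C)^2)"
      by (rule Cauchy_Schwarz_ineq_sum)
    also have "(\<Sum>C\<in>shadow k S. (1::real)^2) = X" unfolding X_def by simp
    also have "(\<Sum>C\<in>shadow k S. (Dn k f C)^2) \<le> ip (k - 1) (Dn k f) (Dn k f)"
      unfolding ip_def power2_eq_square by (rule sum_mono2) (use shL in auto)
    finally show ?thesis unfolding X_def by (simp add: mult_left_mono)
  qed
  have X0: "X \<ge> 0" unfolding X_def by simp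
  have ineq: "(a * s)^2 \<le> X * (lam q n k * (s - s^2 / N) + (s / N)^2 * b^2 * M)"
  proof -
    have "ip (k - 1) (Dn k f) (Dn k f) \<le> lam q n k * (s - s^2 / N) + (s / N)^2 * b^2 * M"
      using ipff spec_k ipgg unfolding \<mu>_def by simp
    hence "X * ip (k - 1) (Dn k f) (Dn k f) \<le> X * (lam q n k * (s - s^2 / N) + (s / N)^2 * b^2 * M)"
      using X0 by (rule mult_left_mono)
    thus ?thesis using CS by linarith
  qed
  have lam0: "lam q n k \<ge> 0" by (rule lam_nonneg[OF qq])
  have fin: "X / M \<ge> 1 / (1 + lam q n k / (a * b) * z)"
    by (rule final_alg[OF a0 b0 N0 s0 sN lam0 MN X0 ineq muS' z])
  have ceq: "lam q n k / (a * b) = (q * (q ^ (k - 1) - 1) * (q ^ (n - k) - 1)) / ((q ^ k - 1) * (q ^ (n - k + 1) - 1))"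
  proof -
    have nk: "n - (k - 1) = n - k + 1" using k1 kn by simp
    have q1: "q - 1 \<noteq> 0" using qq by simp
    have "q ^ k > 1" using qq k1 by (intro one_less_power) auto
    hence c1: "q ^ k - 1 \<noteq> 0" by simp
    have "q ^ (n - k + 1) > 1" using qq by (intro one_less_power) auto
    hence c2: "q ^ (n - k + 1) - 1 \<noteq> 0" by simp
    show ?thesis unfolding lam_def a_def b_def nk using q1 by (rule frac_aux)
  qed
  have "mu (k - 1) (shadow k S) = X / M" unfolding mu_def X_def M_def by simp
  thus "mu (k - 1) (shadow k S)
           \<ge> 1 / (1 + (q * (q ^ (k - 1) - 1) * (q ^ (n - k) - 1))
                     / ((q ^ k - 1) * (q ^ (n - k + 1) - 1)) * z)" using fin ceq by simp
qed


end
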